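(* Let $n>k\geq1$, $r=n-k$, $2\leq h\leq n-k$, $k<d\leq n-h$, $\delta=\gcd(h,d-k)$, $s_0=\frac{d-k+\delta}{\delta}$, $s=\frac{d-k+h}{\delta}$, $\ell=s\cdot s_0^n$, and let $\mathcal{C}_3$ be the code defined over a finite field $F$ ($|F|\geq s_0n$, with $s_0n$ distinct elements $\lambda_{i,j}\in F$, $i\in[n]$, $j\in[0,s_0-1]$) by the parity check equations $\sum_{i=1}^n \lambda_{i,a_i}^{t-1} c_{i,(a,b)}=0$ for all $a\in[0,s_0^n-1]$, $b\in[0,s-1]$, $t\in[r]$. Let $\mathcal{H}\subseteq[n]$ with $|\mathcal{H}|=h$, let $\mathcal{R}\subseteq[n]\setminus\mathcal{H}$ with $|\mathcal{R}|=d$, and let $P_1,\ldots,P_{h/\delta}$ be a partition of $\mathcal{H}$ into disjoint subsets of size $\delta$. For $i\in[h/\delta]$ let $\Omega_i=\{0,1,\ldots,s_0-2,\,s_0-2+i\}$, and for $j\in[n]$, $a\in[0,s_0^n-1]$ define $$S^{(i)}_j(a)=\sum_{v=0}^{s_0-2}c_{j,(a(P_i,a|_{P_i}\oplus v\bm 1_\delta),\,v)}+c_{j,(a(P_i,a|_{P_i}\oplus(s_0-1)\bm 1_\delta),\,s_0-2+i)}.$$ Then for each $i\in[h/\delta]$ and every codeword of $\mathcal{C}_3$, the symbols $\{S^{(i)}_j(a): j\in\mathcal{R},\ a\in[0,s_0^n-1]\}$ determine both $\{c_{j,(a,b)}: j\in P_i,\ a\in[0,s_0^n-1],\ b\in\Omega_i\}$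 and $\{S^{(i)}_j(a): j\in\mathcal{H}\setminus P_i,\ a\in[0,s_0^n-1]\}$.
   Context: Notation: $[n]=\{1,\ldots,n\}$, $[i,j]=\{i,\ldots,j\}$. Each $\tau\in[0,\ell-1]$ is written uniquely as $\tau=b\cdot s_0^n+\sum_{i=1}^n a_i s_0^{i-1}$ with $b\in[0,s-1]$, $a_i\in[0,s_0-1]$; we write $a=(a_1,\ldots,a_n)$ and $\tau=(a,b)$, and $\bm c_i=(c_{i,0},\ldots,c_{i,\ell-1})\in F^\ell$ with $c_{i,(a,b)}=c_{i,\tau}$. For $\mathcal{X}\subseteq[n]$, $a|_{\mathcal{X}}$ denotes the vector of digits $(a_x)_{x\in\mathcal{X}}$, and for $\bm v\in[0,s_0-1]^{|\mathcal{X}|}$, $a(\mathcal{X},\bm v)$ is the integer whose digits on $\mathcal{X}$ equal $\bm v$ and whose other digits equal those of $a$. The operation $\oplus$ is digitwise addition modulo $s_0$, and $\bm 1_\delta$ is the all-one vector of length $\delta$. *)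

theory Defs
  imports Main
begin

definition digit :: "nat \<Rightarrow> nat \<Rightarrow> nat \<Rightarrow> nat" where
  "digit s0 a x = (a div s0 ^ (x - 1)) mod s0"

text \<open>shift_idx s0 n a P v = a(P, a|_P \<oplus> v 1_\<delta>): digits in P are increased by v mod s0,
  other digits are kept.\<close>
definition shift_idx :: "nat \<Rightarrow> nat \<Rightarrow> nat \<Rightarrow> nat set \<Rightarrow> nat \<Rightarrow> nat" where
  "shift_idx s0 n a P v =
     (\<Sum>x\<in>{1..n}. (if x \<in> P then (digit s0 a x + v) mod s0 else digit s0 a x) * s0 ^ (x - 1))"

text \<open>Codewords of C_3: c i a b = c_{i,(a,b)}, i \<in> [n], a \<in> [0,s0^n-1], b \<in> [0,s-1].\<close>
definition is_codeword_C3 ::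
  "nat \<Rightarrow> nat \<Rightarrow> nat \<Rightarrow> nat \<Rightarrow> (nat \<Rightarrow> nat \<Rightarrow> 'f::field) \<Rightarrow> (nat \<Rightarrow> nat \<Rightarrow> nat \<Rightarrow> 'f) \<Rightarrow> bool" where
  "is_codeword_C3 n r s0 s lam c \<longleftrightarrow>
     (\<forall>a < s0 ^ n. \<forall>b < s. \<forall>t \<in> {1..r}.
        (\<Sum>i\<in>{1..n}. (lam i (digit s0 a i)) ^ (t - 1) * c i a b) = 0)"

text \<open>The repair symbol S^{(i)}_j(a), with partition block P = P_i.\<close>
definition S_sym ::
  "nat \<Rightarrow> nat \<Rightarrow> nat set \<Rightarrow> nat \<Rightarrow> (nat \<Rightarrow> nat \<Rightarrow> nat \<Rightarrow> 'f::field) \<Rightarrow> nat \<Rightarrow> nat \<Rightarrow> 'f" where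
  "S_sym s0 n P i c j a =
     (\<Sum>v\<in>{0..s0 - 2}. c j (shift_idx s0 n a P v) v)
     + c j (shift_idx s0 n a P (s0 - 1)) (s0 - 2 + i)"

end

theory Submission imports Defs "HOL-Computational_Algebra.Polynomial" "HOL-Number_Theory.Cong" begin

lemma vandermonde_zero:
  fixes x y :: "'b \<Rightarrow> 'f::field"
  assumes fin: "finite N" and cN: "card N \<le> r" and inj: "inj_on x N"
    and eqs: "\<forall>t\<in>{1..r}. (\<Sum>u\<in>N. x u ^ (t - 1) * y u) = 0" and u0: "u0 \<in> N"
  shows "y u0 = 0"
proof -
  define p where "p = (\<Prod>u\<in>N - {u0}. [:- x u, 1:])"
  have dp: "degree p \<le> card (N - {u0})"
    unfolding p_def using degree_prod_sum_le[of "N - {u0}" "\<lambda>u. [:- x u, 1:]"] fin by simp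
  have cN2: "card (N - {u0}) < card N" using fin u0 by (meson card_Diff1_less)
  have "(\<Sum>u\<in>N. poly p (x u) * y u) = (\<Sum>u\<in>N. \<Sum>k\<le>degree p. coeff p k * (x u ^ k * y u))"
    by (simp add: poly_altdef sum_distrib_right mult.assoc)
  also have "\<dots> = (\<Sum>k\<le>degree p. coeff p k * (\<Sum>u\<in>N. x u ^ k * y u))"
    by (subst sum.swap) (simp add: sum_distrib_left)
  also have "\<dots> = 0"
  proof (rule sum.neutral, rule ballI)
    fix k assume "k \<in> {..degree p}"
    then have "Suc k \<in> {1..r}" using dp cN2 cN by auto
    then have "(\<Sum>u\<in>N. x u ^ (Suc k - 1) * y u) = 0" using eqs by blast
    then show "coeff p k * (\<Sum>u\<in>N. x u ^ k * y u) = 0" by simp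
  qed
  finally have s0: "(\<Sum>u\<in>N. poly p (x u) * y u) = 0" .
  have "(\<Sum>u\<in>N. poly p (x u) * y u) = poly p (x u0) * y u0 + (\<Sum>u\<in>N - {u0}. poly p (x u) * y u)"
    using fin u0 by (simp add: sum.remove)
  also have "(\<Sum>u\<in>N - {u0}. poly p (x u) * y u) = 0"
  proof (rule sum.neutral, rule ballI)
    fix u assume u: "u \<in> N - {u0}"
    have "poly p (x u) = (\<Prod>w\<in>N - {u0}. x u - x w)" unfolding p_def poly_prod by simp
    also have "\<dots> = 0" using u fin by (intro prod_zero) auto
    finally show "poly p (x u) * y u = 0" by simp
  qed
  finally have "poly p (x u0) * y u0 = 0" using s0 by simp
  moreover have "poly p (x u0) \<noteq> 0"
  proof -
    have "poly p (x u0) = (\<Prod>w\<in>N - {u0}. x u0 - x w)" unfolding p_def poly_prod by simp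
    moreover have "\<forall>w\<in>N - {u0}. x u0 - x w \<noteq> 0" using inj u0 by (auto simp: inj_on_def)
    ultimately show ?thesis using fin by simp
  qed
  ultimately show ?thesis by simp
qed

lemma sum_shift1:
  "(\<Sum>x\<in>{1..Suc n}. f x * (s0::nat) ^ (x - 1)) = f 1 + s0 * (\<Sum>x\<in>{1..n}. f (Suc x) * s0 ^ (x - 1))"
proof -
  have "(\<Sum>x\<in>{1..Suc n}. f x * s0 ^ (x - 1)) = f 1 + (\<Sum>x\<in>{Suc 1..Suc n}. f x * s0 ^ (x - 1))"
    by (simp add: sum.atLeast_Suc_atMost)
  also have "(\<Sum>x\<in>{Suc 1..Suc n}. f x * s0 ^ (x - 1)) = (\<Sum>x\<in>{1..n}. f (Suc x) * s0 ^ x)"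
    by (subst sum.shift_bounds_cl_Suc_ivl) simp
  also have "\<dots> = (\<Sum>x\<in>{1..n}. s0 * (f (Suc x) * s0 ^ (x - 1)))"
    by (rule sum.cong) (auto simp: power_eq_if)
  finally show ?thesis by (simp add: sum_distrib_left)
qed

lemma digit_Suc: "digit s0 a (Suc x) = digit s0 (a div s0) x" if "x \<ge> 1"
  using that by (cases x) (auto simp: digit_def div_mult2_eq mult.commute)

lemma digit_1: "digit s0 a 1 = a mod s0" by (simp add: digit_def)

lemma digit_repr: "(s0::nat) > 0 \<Longrightarrow> a < s0 ^ n \<Longrightarrow> (\<Sum>x\<in>{1..n}. digit s0 a x * s0 ^ (x - 1)) = a"
proof (induction n arbitrary: a)
  case 0 then show ?case by simp
next
  case (Suc n)
  have "a div s0 < s0 ^ n" using Suc.prems by (simp add: less_mult_imp_div_less mult.commute)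
  then have ih: "(\<Sum>x\<in>{1..n}. digit s0 (a div s0) x * s0 ^ (x - 1)) = a div s0" using Suc.IH Suc.prems(1) by simp
  have "(\<Sum>x\<in>{1..n}. digit s0 a (Suc x) * s0 ^ (x - 1)) = (\<Sum>x\<in>{1..n}. digit s0 (a div s0) x * s0 ^ (x - 1))"
    by (rule sum.cong) (auto simp: digit_Suc)
  then show ?case unfolding sum_shift1 using ih by (simp add: digit_def)
qed

lemma digit_sum: "(s0::nat) > 0 \<Longrightarrow> \<forall>x. f x < s0 \<Longrightarrow> y \<in> {1..n} \<Longrightarrow> digit s0 (\<Sum>x\<in>{1..n}. f x * s0 ^ (x - 1)) y = f y"
proof (induction n arbitrary: f y)
  case 0 then show ?case by simp
next
  case (Suc n)
  show ?case
  proof (cases "y = 1")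
    case True then show ?thesis unfolding sum_shift1 using Suc.prems by (simp add: digit_def)
  next
    case False
    then obtain y' where y': "y = Suc y'" "y' \<in> {1..n}" using Suc.prems by (cases y) auto
    have "digit s0 (\<Sum>x\<in>{1..Suc n}. f x * s0 ^ (x - 1)) y
        = digit s0 ((f 1 + s0 * (\<Sum>x\<in>{1..n}. f (Suc x) * s0 ^ (x - 1))) div s0) y'"
      using y' unfolding sum_shift1 by (simp add: digit_Suc)
    also have "(f 1 + s0 * (\<Sum>x\<in>{1..n}. f (Suc x) * s0 ^ (x - 1))) div s0 = (\<Sum>x\<in>{1..n}. f (Suc x) * s0 ^ (x - 1))"
      using Suc.prems by simp
    also have "digit s0 \<dots> y' = f (Suc y')" using Suc.IH[of "\<lambda>x. f (Suc x)" y'] Suc.prems y' by blast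
    finally show ?thesis using y' by simp
  qed
qed

lemma sum_bound: "(s0::nat) > 0 \<Longrightarrow> \<forall>x. f x < s0 \<Longrightarrow> (\<Sum>x\<in>{1..n}. f x * s0 ^ (x - 1)) < s0 ^ n"
proof (induction n arbitrary: f)
  case 0 then show ?case by simp
next
  case (Suc n)
  have "(\<Sum>x\<in>{1..n}. f (Suc x) * s0 ^ (x - 1)) < s0 ^ n" using Suc.IH[of "\<lambda>x. f (Suc x)"] Suc.prems by simp
  then have "(\<Sum>x\<in>{1..n}. f (Suc x) * s0 ^ (x - 1)) + 1 \<le> s0 ^ n" by simp
  then have "s0 * ((\<Sum>x\<in>{1..n}. f (Suc x) * s0 ^ (x - 1)) + 1) \<le> s0 * s0 ^ n"
    by (rule mult_le_mono2)
  moreover have "f 1 < s0" using Suc.prems by blast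
  ultimately show ?case unfolding sum_shift1 by (simp add: algebra_simps)
qed

lemma digit_lt: "(s0::nat) > 0 \<Longrightarrow> digit s0 a x < s0" by (simp add: digit_def)

lemma digit_shift: "(s0::nat) > 0 \<Longrightarrow> x \<in> {1..n} \<Longrightarrow>
  digit s0 (shift_idx s0 n a P v) x = (if x \<in> P then (digit s0 a x + v) mod s0 else digit s0 a x)"
  unfolding shift_idx_def by (rule digit_sum) (auto simp: digit_lt)

lemma shift_lt: "(s0::nat) > 0 \<Longrightarrow> shift_idx s0 n a P v < s0 ^ n"
  unfolding shift_idx_def by (rule sum_bound) (auto simp: digit_lt)

lemma digits_eq: "(s0::nat) > 0 \<Longrightarrow> a < s0 ^ n \<Longrightarrow> b < s0 ^ n \<Longrightarrow> \<forall>x\<in>{1..n}. digit s0 a x = digit s0 b x \<Longrightarrow> a = b"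
  by (metis (no_types, lifting) digit_repr sum.cong)

lemma shift_surj: assumes "(s0::nat) > 0" "a' < s0 ^ n" "v < s0"
  shows "shift_idx s0 n (shift_idx s0 n a' P (s0 - v)) P v = a'"
proof (rule digits_eq[OF assms(1) shift_lt[OF assms(1)] assms(2)], rule ballI)
  fix x assume x: "x \<in> {1..n}"
  have "((digit s0 a' x + (s0 - v)) mod s0 + v) mod s0 = (digit s0 a' x + s0) mod s0"
    using assms(3) by (simp add: mod_add_left_eq)
  also have "\<dots> = digit s0 a' x" using digit_lt[OF assms(1)] by simp
  finally show "digit s0 (shift_idx s0 n (shift_idx s0 n a' P (s0 - v)) P v) x = digit s0 a' x"
    using x assms(1) by (simp add: digit_shift)
qed


lemma main_step:
  fixes lam :: "nat \<Rightarrow> nat \<Rightarrow> 'f::field" and e :: "nat \<Rightarrow> nat \<Rightarrow> nat \<Rightarrow> 'f"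
  assumes s0: "s0 \<ge> 2" and PS: "P \<subseteq> {1..n}" and RS: "R \<subseteq> {1..n}" and PR: "P \<inter> R = {}"
    and cardN: "card ({1..n} - P - R) + card P * s0 \<le> r"
    and inj: "inj_on (\<lambda>(i, j). lam i j) ({1..n} \<times> {0..s0 - 1})"
    and bs: "s0 - 2 + i < s"
    and code: "is_codeword_C3 n r s0 s lam e"
    and SR: "\<forall>j\<in>R. S_sym s0 n P i e j a = 0"
    and a: "a < s0 ^ n"
  shows "(\<forall>j\<in>P. \<forall>v\<in>{0..s0-1}. e j (shift_idx s0 n a P v) (if v \<le> s0 - 2 then v else s0 - 2 + i) = 0)
       \<and> (\<forall>j\<in>{1..n} - P - R. S_sym s0 n P i e j a = 0)"
proof -
  have s0p: "s0 > 0" using s0 by simp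
  define bb where "bb v = (if v \<le> s0 - 2 then v else s0 - 2 + i)" for v
  define av where "av v = shift_idx s0 n a P v" for v
  define Q where "Q = {1..n} - P - R"
  have Sdef: "S_sym s0 n P i e j a = (\<Sum>v\<in>{0..s0-1}. e j (av v) (bb v))" for j
  proof -
    have e1: "{0..s0-1} = {0..Suc (s0 - 2)}" using s0 by (simp add: numeral_2_eq_2 Suc_diff_Suc)
    have "(\<Sum>v\<in>{0..s0-1}. e j (av v) (bb v)) = (\<Sum>v\<in>{0..s0-2}. e j (av v) (bb v)) + e j (av (s0 - 1)) (bb (s0 - 1))"
      unfolding e1 by (simp add: sum.atLeast0_atMost_Suc) (metis Suc_diff_Suc Suc_le_lessD numeral_2_eq_2 s0)
    also have "(\<Sum>v\<in>{0..s0-2}. e j (av v) (bb v)) = (\<Sum>v\<in>{0..s0-2}. e j (av v) v)"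
      by (rule sum.cong) (auto simp: bb_def)
    also have "bb (s0 - 1) = s0 - 2 + i" using s0 by (simp add: bb_def)
    finally show ?thesis unfolding S_sym_def av_def by simp
  qed
  have dav: "digit s0 (av v) j = (if j \<in> P then (digit s0 a j + v) mod s0 else digit s0 a j)" if "j \<in> {1..n}" for j v
    unfolding av_def using digit_shift[OF s0p that] by simp
  define dig where "dig u = (if fst u \<in> P then (digit s0 a (fst u) + snd u) mod s0 else digit s0 a (fst u))" for u
  define x where "x u = lam (fst u) (dig u)" for u
  define y where "y u = (if fst u \<in> P then e (fst u) (av (snd u)) (bb (snd u)) else S_sym s0 n P i e (fst u) a)" for u
  define N where "N = (\<lambda>j. (j, 0::nat)) ` Q \<union> P \<times> {0..s0-1}"
  have finQ: "finite Q" "finite P" unfolding Q_def using PS finite_subset by auto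
  have disj: "(\<lambda>j. (j, 0::nat)) ` Q \<inter> P \<times> {0..s0-1} = {}" unfolding Q_def by auto
  have finN: "finite N" unfolding N_def using finQ by auto
  have cN: "card N \<le> r"
  proof -
    have "card N = card Q + card P * card {0..s0-1}"
      unfolding N_def using finQ disj by (simp add: card_Un_disjoint card_image inj_on_def card_cartesian_product)
    also have "card {0..s0-1} = s0" using s0 by simp
    finally show ?thesis using cardN Q_def by simp
  qed
  have injx: "inj_on x N"
  proof (rule inj_onI)
    have ltm: "m < s0 \<Longrightarrow> m \<le> s0 - Suc 0" for m by simp
    fix u w assume u: "u \<in> N" and w: "w \<in> N" and xe: "x u = x w"
    have uin: "(fst u, dig u) \<in> {1..n} \<times> {0..s0 - 1}" using u PS digit_lt[OF s0p] s0p
      unfolding N_def Q_def dig_def by (auto intro!: ltm simp: s0p)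
    have win: "(fst w, dig w) \<in> {1..n} \<times> {0..s0 - 1}" using w PS digit_lt[OF s0p] s0p
      unfolding N_def Q_def dig_def by (auto intro!: ltm simp: s0p)
    have "(fst u, dig u) = (fst w, dig w)" using inj_onD[OF inj _ uin win] xe unfolding x_def by simp
    then have f: "fst u = fst w" and dg: "dig u = dig w" by auto
    show "u = w"
    proof (cases "fst u \<in> P")
      case True
      then have "snd u < s0" "snd w < s0" using u w f s0p unfolding N_def Q_def by auto
      moreover have "[digit s0 a (fst u) + snd u = digit s0 a (fst u) + snd w] (mod s0)"
        using dg True f unfolding dig_def cong_def by simp
      then have "[snd u = snd w] (mod s0)" by (simp add: cong_add_lcancel_nat)
      ultimately have "snd u = snd w" by (simp add: cong_less_modulus_unique_nat)
      then show ?thesis using f by (simp add: prod_eq_iff)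
    next
      case False
      then have "snd u = 0" "snd w = 0" using u w f unfolding N_def Q_def by auto
      then show ?thesis using f by (simp add: prod_eq_iff)
    qed
  qed
  have eqs: "\<forall>t\<in>{1..r}. (\<Sum>u\<in>N. x u ^ (t - 1) * y u) = 0"
  proof
    fix t assume t: "t \<in> {1..r}"
    have each: "(\<Sum>j\<in>{1..n}. (lam j (digit s0 (av v) j)) ^ (t - 1) * e j (av v) (bb v)) = 0" if "v \<in> {0..s0-1}" for v
    proof -
      have "av v < s0 ^ n" unfolding av_def by (rule shift_lt[OF s0p])
      moreover have "bb v < s" using that bs s0 unfolding bb_def by auto
      ultimately show ?thesis using code t unfolding is_codeword_C3_def by blast
    qed
    define g where "g j = (\<Sum>v\<in>{0..s0-1}. (lam j (digit s0 (av v) j)) ^ (t - 1) * e j (av v) (bb v))" for j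
    have "(\<Sum>j\<in>{1..n}. g j) = 0"
      unfolding g_def by (subst sum.swap) (rule sum.neutral, use each in blast)
    have split: "{1..n} = P \<union> (R \<union> Q)" using PS RS unfolding Q_def by auto
    have "(\<Sum>j\<in>{1..n}. g j) = (\<Sum>j\<in>P. g j) + ((\<Sum>j\<in>R. g j) + (\<Sum>j\<in>Q. g j))"
    proof -
      have fR: "finite R" using RS finite_subset by auto
      have d1: "P \<inter> (R \<union> Q) = {}" "R \<inter> Q = {}" using PR unfolding Q_def by auto
      show ?thesis unfolding split
        by (simp add: sum.union_disjoint finQ fR d1)
    qed
    moreover have gnP: "g j = lam j (digit s0 a j) ^ (t - 1) * S_sym s0 n P i e j a" if "j \<in> {1..n}" "j \<notin> P" for j
      unfolding g_def Sdef sum_distrib_left using dav[OF that(1)] that by simp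
    moreover have "(\<Sum>j\<in>R. g j) = 0"
    proof (rule sum.neutral, rule ballI)
      fix j assume j: "j \<in> R"
      then have "j \<in> {1..n}" "j \<notin> P" using RS PR by auto
      then show "g j = 0" using gnP SR j by simp
    qed
    moreover have "(\<Sum>j\<in>Q. g j) = (\<Sum>u\<in>(\<lambda>j. (j, 0::nat)) ` Q. x u ^ (t - 1) * y u)"
    proof -
      have "(\<Sum>u\<in>(\<lambda>j. (j, 0::nat)) ` Q. x u ^ (t - 1) * y u) = (\<Sum>j\<in>Q. x (j, 0) ^ (t - 1) * y (j, 0))"
        by (subst sum.reindex) (auto simp: inj_on_def)
      also have "\<dots> = (\<Sum>j\<in>Q. g j)"
      proof (rule sum.cong[OF refl])
        fix j assume "j \<in> Q"
        then have j: "j \<in> {1..n}" "j \<notin> P" unfolding Q_def by auto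
        show "x (j, 0) ^ (t - 1) * y (j, 0) = g j"
          unfolding gnP[OF j] using j(2) by (simp add: x_def y_def dig_def)
      qed
      finally show ?thesis by simp
    qed
    moreover have "(\<Sum>j\<in>P. g j) = (\<Sum>u\<in>P \<times> {0..s0-1}. x u ^ (t - 1) * y u)"
    proof -
      have "(\<Sum>j\<in>P. g j) = (\<Sum>j\<in>P. \<Sum>v\<in>{0..s0-1}. x (j, v) ^ (t - 1) * y (j, v))"
      proof (rule sum.cong[OF refl])
        fix j assume jP: "j \<in> P"
        then have j: "j \<in> {1..n}" using PS by auto
        show "g j = (\<Sum>v\<in>{0..s0-1}. x (j, v) ^ (t - 1) * y (j, v))"
          unfolding g_def by (rule sum.cong[OF refl]) (simp add: dav[OF j] jP x_def y_def dig_def)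
      qed
      also have "\<dots> = (\<Sum>u\<in>P \<times> {0..s0-1}. x u ^ (t - 1) * y u)"
        by (subst sum.cartesian_product) (simp add: case_prod_unfold)
      finally show ?thesis .
    qed
    ultimately have "(\<Sum>u\<in>P \<times> {0..s0-1}. x u ^ (t - 1) * y u) + (\<Sum>u\<in>(\<lambda>j. (j, 0::nat)) ` Q. x u ^ (t - 1) * y u) = 0"
      using \<open>(\<Sum>j\<in>{1..n}. g j) = 0\<close> by simp
    then show "(\<Sum>u\<in>N. x u ^ (t - 1) * y u) = 0"
      unfolding N_def using finQ disj by (subst sum.union_disjoint) (auto simp: add.commute)
  qed
  have yz: "y u = 0" if "u \<in> N" for u
    by (rule vandermonde_zero[OF finN cN injx eqs that])
  show ?thesis
  proof (intro conjI ballI)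
    fix j v assume "j \<in> P" "v \<in> {0..s0-1}"
    then have "y (j, v) = 0" using yz unfolding N_def by auto
    then show "e j (shift_idx s0 n a P v) (if v \<le> s0 - 2 then v else s0 - 2 + i) = 0"
      using \<open>j \<in> P\<close> unfolding y_def av_def bb_def by (simp split: if_splits)
  next
    fix j assume "j \<in> {1..n} - P - R"
    then have "y (j, 0) = 0" using yz unfolding N_def Q_def by auto
    then show "S_sym s0 n P i e j a = 0" using \<open>j \<in> {1..n} - P - R\<close> unfolding y_def by simp
  qed
qed


theorem lemma1:
  fixes n k h d :: nat
    and lam :: "nat \<Rightarrow> nat \<Rightarrow> 'f::{field,finite}"
    and H R :: "nat set"
    and P :: "nat \<Rightarrow> nat set"
  defines "r \<equiv> n - k"
      and "\<delta> \<equiv> gcd h (d - k)"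
  defines "s0 \<equiv> (d - k + \<delta>) div \<delta>"
      and "s \<equiv> (d - k + h) div \<delta>"
  assumes "n > k" and "k \<ge> 1"
    and "2 \<le> h" and "h \<le> n - k"
    and "k < d" and "d \<le> n - h"
    and "card (UNIV :: 'f set) \<ge> s0 * n"
    and "inj_on (\<lambda>(i, j). lam i j) ({1..n} \<times> {0..s0 - 1})"
    and "H \<subseteq> {1..n}" and "card H = h"
    and "R \<subseteq> {1..n} - H" and "card R = d"
    and "\<forall>i\<in>{1..h div \<delta>}. P i \<subseteq> H \<and> card (P i) = \<delta>"
    and "\<forall>i\<in>{1..h div \<delta>}. \<forall>i'\<in>{1..h div \<delta>}. i \<noteq> i' \<longrightarrow> P i \<inter> P i' = {}"
    and "(\<Union>i\<in>{1..h div \<delta>}. P i) = H"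
    and "i \<in> {1..h div \<delta>}"
    and "is_codeword_C3 n r s0 s lam c"
    and "is_codeword_C3 n r s0 s lam c'"
    and "\<forall>j\<in>R. \<forall>a < s0 ^ n. S_sym s0 n (P i) i c j a = S_sym s0 n (P i) i c' j a"
  shows "(\<forall>j\<in>P i. \<forall>a < s0 ^ n. \<forall>b \<in> {0..s0 - 2} \<union> {s0 - 2 + i}. c j a b = c' j a b)
       \<and> (\<forall>j\<in>H - P i. \<forall>a < s0 ^ n. S_sym s0 n (P i) i c j a = S_sym s0 n (P i) i c' j a)"
proof -
  note A = assms
  define e where "e j a b = c j a b - c' j a b" for j a b
  define m where "m = (d - k) div \<delta>"
  have dpos: "\<delta> > 0" unfolding \<delta>_def using A(7) by simp
  have dvd1: "\<delta> dvd (d - k)" "\<delta> dvd h" unfolding \<delta>_def by auto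
  have dk: "d - k = m * \<delta>" unfolding m_def using dvd1 by simp
  have m1: "m \<ge> 1" using dk A(9) by (cases m) auto
  have s0m: "s0 = m + 1" unfolding s0_def dk using dpos by simp
  have s0_2: "s0 \<ge> 2" using s0m m1 by simp
  obtain q where hq: "h = q * \<delta>" using dvd1(2) by (metis dvd_def mult.commute)
  have hd: "h div \<delta> = q" using hq dpos by simp
  have sm: "s = m + q" unfolding s_def dk hq using dpos by (simp add: add_mult_distrib[symmetric])
  have iq: "1 \<le> i" "i \<le> q" using A(20) hd by auto
  have bs: "s0 - 2 + i < s" using s0m sm iq m1 by simp
  have Pi: "P i \<subseteq> H" "card (P i) = \<delta>" using A(17) A(20) by auto
  have PS: "P i \<subseteq> {1..n}" using Pi A(13) by auto
  have RS: "R \<subseteq> {1..n}" using A(15) by auto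
  have PR: "P i \<inter> R = {}" using Pi A(15) by auto
  have cardQ: "card ({1..n} - P i - R) = n - \<delta> - d"
  proof -
    have "card ({1..n} - P i) = n - \<delta>" using PS Pi by (simp add: card_Diff_subset finite_subset)
    moreover have "R \<subseteq> {1..n} - P i" using RS PR by auto
    ultimately show ?thesis using A(16) by (simp add: card_Diff_subset finite_subset)
  qed
  have dh: "\<delta> \<le> h" unfolding \<delta>_def using A(7) by (simp add: gcd_le1_nat)
  have cardN: "card ({1..n} - P i - R) + card (P i) * s0 \<le> r"
    unfolding cardQ Pi r_def using s0m dk dh A(8) A(9) A(10)
    by (simp add: algebra_simps)
  have code: "is_codeword_C3 n r s0 s lam e"
    using A(21) A(22) unfolding is_codeword_C3_def e_def
    by (simp add: right_diff_distrib sum_subtractf)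
  have Slin: "S_sym s0 n (P i) i e j a = S_sym s0 n (P i) i c j a - S_sym s0 n (P i) i c' j a" for j a
    unfolding S_sym_def e_def by (simp add: sum_subtractf)
  have SR: "\<forall>j\<in>R. S_sym s0 n (P i) i e j a = 0" if "a < s0 ^ n" for a
    using A(23) that Slin by simp
  have ms: "(\<forall>j\<in>P i. \<forall>v\<in>{0..s0-1}. e j (shift_idx s0 n a (P i) v) (if v \<le> s0 - 2 then v else s0 - 2 + i) = 0)
       \<and> (\<forall>j\<in>{1..n} - P i - R. S_sym s0 n (P i) i e j a = 0)" if "a < s0 ^ n" for a
    by (rule main_step[OF s0_2 PS RS PR cardN A(12) bs code SR[OF that] that])
  have s0p: "s0 > 0" using s0_2 by simp
  show ?thesis
  proof (intro conjI ballI allI impI)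
    fix j a' b assume j: "j \<in> P i" and a': "a' < s0 ^ n" and b: "b \<in> {0..s0 - 2} \<union> {s0 - 2 + i}"
    define v where "v = (if b \<le> s0 - 2 then b else s0 - 1)"
    have v: "v < s0" "v \<in> {0..s0-1}" using s0_2 unfolding v_def by auto
    have bv: "(if v \<le> s0 - 2 then v else s0 - 2 + i) = b" using b s0_2 iq unfolding v_def by auto
    define a where "a = shift_idx s0 n a' (P i) (s0 - v)"
    have a: "a < s0 ^ n" unfolding a_def by (rule shift_lt[OF s0p])
    have sh: "shift_idx s0 n a (P i) v = a'" unfolding a_def by (rule shift_surj[OF s0p a' v(1)])
    have "e j (shift_idx s0 n a (P i) v) (if v \<le> s0 - 2 then v else s0 - 2 + i) = 0"
      using bspec[OF bspec[OF conjunct1[OF ms[OF a]] j] v(2)] .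
    then have "e j a' b = 0" unfolding sh bv .
    then show "c j a' b = c' j a' b" unfolding e_def by simp
  next
    fix j a assume j: "j \<in> H - P i" and a: "a < s0 ^ n"
    then have "j \<in> {1..n} - P i - R" using A(13) A(15) by auto
    then have "S_sym s0 n (P i) i e j a = 0" using ms[OF a] by blast
    then show "S_sym s0 n (P i) i c j a = S_sym s0 n (P i) i c' j a" using Slin by simp
  qed
qed

end
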